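(* For every real number $p$ with $0 \leq p \leq \frac{1}{2}$, there is a many-one degree $\mathbf{a}$ such that $\Gamma_m(\mathbf{a}) = p$.
   Context: For $Z \subseteq \omega$, the lower density of $Z$ is $\underline{\rho}(Z) := \liminf_{n \to \infty} \frac{|Z \cap [0,n)|}{n}$. For sets $A, R \subseteq \omega$, let $A \leftrightarrow R := \{ x \mid x \in A \Longleftrightarrow x \in R \}$ be the set on which $A$ and $R$ agree. The coarse computability bound of a set $A \subseteq \omega$ is $\gamma(A) := \sup\{\underline{\rho}(A \leftrightarrow R) \mid R \subseteq \omega \text{ computable}\}$. For a many-one degree $\mathbf{a}$ (an equivalence class of subsets of $\omega$ under mutual many-one reducibility $\leq_m$), its coarse computability bound is $\Gamma_m(\mathbf{a}) := \inf\{\gamma(A) \mid A \leq_m \mathbf{a}\}$, where $A \leq_m \mathbf{a}$ means $A$ is many-one reducible to some (equivalently every) set in $\mathbf{a}$. *)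

theory Defs
  imports Main "HOL-Library.Nat_Bijection" "HOL-Library.Extended_Real" "HOL-Library.Liminf_Limsup"
begin

datatype recf =
    Zero | Succ | Left | Right
  | PairF recf recf
  | Comp recf recf
  | Prec recf recf
  | Rfind recf

inductive ev :: "recf \<Rightarrow> nat \<Rightarrow> nat \<Rightarrow> bool" where
  ev_zero: "ev Zero n 0"
| ev_succ: "ev Succ n (Suc n)"
| ev_left: "ev Left n (fst (prod_decode n))"
| ev_right: "ev Right n (snd (prod_decode n))"
| ev_pair: "ev f n a \<Longrightarrow> ev g n b \<Longrightarrow> ev (PairF f g) n (prod_encode (a, b))"
| ev_comp: "ev g n m \<Longrightarrow> ev f m k \<Longrightarrow> ev (Comp f g) n k"
| ev_prec0: "ev f a k \<Longrightarrow> ev (Prec f g) (prod_encode (a, 0)) k"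
| ev_precS: "ev (Prec f g) (prod_encode (a, y)) i \<Longrightarrow>
             ev g (prod_encode (a, prod_encode (y, i))) k \<Longrightarrow>
             ev (Prec f g) (prod_encode (a, Suc y)) k"
| ev_rfind: "ev f (prod_encode (a, m)) 0 \<Longrightarrow>
             (\<forall>j<m. \<exists>v. v > 0 \<and> ev f (prod_encode (a, j)) v) \<Longrightarrow>
             ev (Rfind f) a m"

definition computable_fun :: "(nat \<Rightarrow> nat) \<Rightarrow> bool" where
  "computable_fun h \<longleftrightarrow> (\<exists>c. \<forall>n. ev c n (h n))"

definition computable_set :: "nat set \<Rightarrow> bool" where
  "computable_set R \<longleftrightarrow> computable_fun (\<lambda>n. if n \<in> R then 1 else 0)"

definition m_reducible :: "nat set \<Rightarrow> nat set \<Rightarrow> bool" (infix "\<le>\<^sub>m" 50) where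
  "A \<le>\<^sub>m B \<longleftrightarrow> (\<exists>f. computable_fun f \<and> (\<forall>x. x \<in> A \<longleftrightarrow> f x \<in> B))"

definition m_degree :: "nat set set \<Rightarrow> bool" where
  "m_degree D \<longleftrightarrow> (\<exists>B. D = {A. A \<le>\<^sub>m B \<and> B \<le>\<^sub>m A})"

definition lower_density :: "nat set \<Rightarrow> ereal" where
  "lower_density Z = liminf (\<lambda>n. ereal (real (card (Z \<inter> {..<n})) / real n))"

definition agree :: "nat set \<Rightarrow> nat set \<Rightarrow> nat set" where
  "agree A R = {x. x \<in> A \<longleftrightarrow> x \<in> R}"

definition gamma :: "nat set \<Rightarrow> ereal" where
  "gamma A = Sup {lower_density (agree A R) | R. computable_set R}"

definition Gamma_m :: "nat set set \<Rightarrow> ereal" where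
  "Gamma_m D = Inf {gamma A | A. \<exists>B\<in>D. A \<le>\<^sub>m B}"

end

theory Submission
  imports Defs "HOL-Probability.Hoeffding" "HOL-Probability.Infinite_Product_Measure"
begin

lemma ev_left': "ev Left (prod_encode (a,b)) a"
  using ev_left[of "prod_encode (a,b)"] by simp
lemma ev_right': "ev Right (prod_encode (a,b)) b"
  using ev_right[of "prod_encode (a,b)"] by simp

inductive_cases evE_Pair: "ev (PairF f g) n k"
inductive_cases evE_Comp: "ev (Comp f g) n k"
inductive_cases evE_Prec: "ev (Prec f g) n k"
inductive_cases evE_Rfind: "ev (Rfind f) n k"
inductive_cases evE_Zero: "ev Zero n k"
inductive_cases evE_Succ: "ev Succ n k"
inductive_cases evE_Left: "ev Left n k"
inductive_cases evE_Right: "ev Right n k"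

lemma ev_det: "ev c n a \<Longrightarrow> ev c n b \<Longrightarrow> a = b"
proof (induction arbitrary: b rule: ev.induct)
  case (ev_zero n) then show ?case by (auto elim: evE_Zero)
next
  case (ev_succ n) then show ?case by (auto elim: evE_Succ)
next
  case (ev_left n) then show ?case by (auto elim: evE_Left)
next
  case (ev_right n) then show ?case by (auto elim: evE_Right)
next
  case (ev_pair f n a g b')
  from ev_pair.prems show ?case
    by (rule evE_Pair) (simp add: ev_pair.IH)
next
  case (ev_comp g n m f k)
  from ev_comp.prems show ?case
  proof (rule evE_Comp)
    fix m' assume "ev g n m'" "ev f m' b"
    then have "m' = m" using ev_comp.IH(1) by simp
    then show "k = b" using ev_comp.IH(2) \<open>ev f m' b\<close> by simp
  qed
next
  case (ev_prec0 f a k g)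
  from ev_prec0.prems show ?case
    by (rule evE_Prec) (auto simp: prod_encode_eq ev_prec0.IH)
next
  case (ev_precS f g a y i k)
  from ev_precS.prems show ?case
  proof (rule evE_Prec)
    fix a' k' assume "prod_encode (a, Suc y) = prod_encode (a', 0)"
    then show ?thesis by (simp add: prod_encode_eq)
  next
    fix a' y' i' assume h: "prod_encode (a, Suc y) = prod_encode (a', Suc y')"
      "ev (Prec f g) (prod_encode (a', y')) i'" "ev g (prod_encode (a', prod_encode (y', i'))) b"
    then have "a' = a" "y' = y" by (auto simp: prod_encode_eq)
    with h have "i' = i" using ev_precS.IH(1) by simp
    with h \<open>a' = a\<close> \<open>y' = y\<close> show ?thesis using ev_precS.IH(2) by simp
  qed
next
  case (ev_rfind f a m)
  from ev_rfind.prems show ?case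
  proof (rule evE_Rfind)
    assume b0: "ev f (prod_encode (a, b)) 0" and bl: "\<forall>j<b. \<exists>v>0. ev f (prod_encode (a, j)) v"
    show ?thesis
    proof (rule ccontr)
      assume "m \<noteq> b"
      then have "m < b \<or> b < m" by auto
      then show False
      proof
        assume "m < b"
        then obtain v where "v > 0" "ev f (prod_encode (a, m)) v" using bl by auto
        with ev_rfind.IH(1) show False by fastforce
      next
        assume "b < m"
        then obtain v where v: "v > 0" "\<And>w. ev f (prod_encode (a, b)) w \<Longrightarrow> v = w"
          using ev_rfind.IH(2) by blast
        with b0 show False by fastforce
      qed
    qed
  qed
qed

definition "IdP = PairF Left Right"
lemma ev_IdP: "ev IdP n n"
  unfolding IdP_def using ev_pair[OF ev_left ev_right, of n] by simp

definition "Yp = Comp Left Right"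
definition "Ip = Comp Right Right"
lemma ev_Yp: "ev Yp (prod_encode (a, prod_encode (y, i))) y"
  unfolding Yp_def by (rule ev_comp[OF ev_right' ev_left'])
lemma ev_Ip: "ev Ip (prod_encode (a, prod_encode (y, i))) i"
  unfolding Ip_def by (rule ev_comp[OF ev_right' ev_right'])

definition "Pred2 = Prec Zero Yp"
lemma ev_Pred2: "ev Pred2 (prod_encode (a, y)) (y - 1)"
proof (induction y)
  case 0 show ?case unfolding Pred2_def using ev_prec0[OF ev_zero] by simp
next
  case (Suc y)
  show ?case unfolding Pred2_def
    using ev_precS[OF Suc[unfolded Pred2_def] ev_Yp] by simp
qed

definition "PredP = Comp Pred2 Ip"
definition "Sub = Prec IdP (Comp Pred2 (PairF Zero Ip))"
lemma ev_Sub: "ev Sub (prod_encode (u, v)) (u - v)"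
proof (induction v)
  case 0 show ?case unfolding Sub_def using ev_prec0[OF ev_IdP] by simp
next
  case (Suc v)
  have e: "u - v - 1 = u - Suc v" by simp
  have "ev (Comp Pred2 (PairF Zero Ip)) (prod_encode (u, prod_encode (v, u - v))) (u - Suc v)"
    using ev_comp[OF ev_pair[OF ev_zero ev_Ip[of u v "u-v"]] ev_Pred2[of 0 "u-v"]] unfolding e .
  then show ?case unfolding Sub_def
    using ev_precS[OF Suc[unfolded Sub_def]] by simp
qed

definition "Add = Prec IdP (Comp Succ Ip)"
lemma ev_Add: "ev Add (prod_encode (u, v)) (u + v)"
proof (induction v)
  case 0 show ?case unfolding Add_def using ev_prec0[OF ev_IdP] by simp
next
  case (Suc v)
  have "ev (Comp Succ Ip) (prod_encode (u, prod_encode (v, u + v))) (u + Suc v)"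
    using ev_comp[OF ev_Ip ev_succ] by simp
  then show ?case unfolding Add_def
    using ev_precS[OF Suc[unfolded Add_def]] by simp
qed

definition "Swap = PairF Right Left"
lemma ev_Swap: "ev Swap (prod_encode (u, v)) (prod_encode (v, u))"
  unfolding Swap_def by (rule ev_pair[OF ev_right' ev_left'])

definition "Dist = Comp Add (PairF Sub (Comp Sub Swap))"
lemma ev_Dist: "ev Dist (prod_encode (u, v)) ((u - v) + (v - u))"
  unfolding Dist_def by (rule ev_comp[OF ev_pair[OF ev_Sub ev_comp[OF ev_Swap ev_Sub]] ev_Add])

definition "IsZ2 = Prec (Comp Succ Zero) Zero"
lemma ev_one: "ev (Comp Succ Zero) n 1"
  using ev_comp[OF ev_zero ev_succ] by (simp only: One_nat_def)

lemma ev_IsZ2: "ev IsZ2 (prod_encode (a, y)) (if y = 0 then 1 else 0)"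
proof (induction y)
  case 0 then show ?case unfolding IsZ2_def using ev_prec0[OF ev_one] by simp
next
  case (Suc y)
  then show ?case unfolding IsZ2_def
    using ev_precS[OF Suc[unfolded IsZ2_def] ev_zero] by (simp only: nat.distinct if_False)
qed

definition "Eq = Comp IsZ2 (PairF Zero Dist)"
lemma ev_Eq: "ev Eq (prod_encode (u, v)) (if u = v then 1 else 0)"
proof -
  have "ev Eq (prod_encode (u, v)) (if (u - v) + (v - u) = 0 then 1 else 0)"
    unfolding Eq_def by (rule ev_comp[OF ev_pair[OF ev_zero ev_Dist] ev_IsZ2])
  moreover have "((u - v) + (v - u) = 0) = (u = v)" by auto
  ultimately show ?thesis by simp
qed

definition cnt :: "(nat \<Rightarrow> nat) \<Rightarrow> nat \<Rightarrow> nat \<Rightarrow> nat" where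
  "cnt f a y = card {x. x < y \<and> f x = f a}"

lemma cnt_Suc: "cnt f a (Suc y) = cnt f a y + (if f y = f a then 1 else 0)"
proof -
  have "{x. x < Suc y \<and> f x = f a} = {x. x < y \<and> f x = f a} \<union> (if f y = f a then {y} else {})"
  proof (intro set_eqI iffI)
    fix x assume "x \<in> {x. x < Suc y \<and> f x = f a}"
    then have "x < y \<or> x = y" "f x = f a" by auto
    then show "x \<in> {x. x < y \<and> f x = f a} \<union> (if f y = f a then {y} else {})" by auto
  qed (auto split: if_splits)
  moreover have "finite {x. x < y \<and> f x = f a}" by simp
  ultimately show ?thesis unfolding cnt_def by (auto simp: card_insert_if)
qed

definition "GH F = Comp Dist (PairF Ip (Comp Eq (PairF (Comp F Yp) (Comp F Left))))"
definition "HP F = Prec Zero (GH F)"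

lemma ev_HP:
  assumes F: "\<And>n. ev F n (f n)"
  shows "ev (HP F) (prod_encode (a, y)) (if even (cnt f a y) then 0 else 1)"
proof (induction y)
  case 0
  have "cnt f a 0 = 0" unfolding cnt_def by simp
  then show ?case unfolding HP_def using ev_prec0[OF ev_zero] by simp
next
  case (Suc y)
  let ?h = "if even (cnt f a y) then 0 else 1 :: nat"
  let ?e = "if f y = f a then 1 else 0 :: nat"
  have g: "ev (GH F) (prod_encode (a, prod_encode (y, ?h))) ((?h - ?e) + (?e - ?h))"
    unfolding GH_def
    by (rule ev_comp[OF ev_pair[OF ev_Ip ev_comp[OF ev_pair[OF ev_comp[OF ev_Yp F] ev_comp[OF ev_left' F]] ev_Eq]] ev_Dist])
  have "(?h - ?e) + (?e - ?h) = (if even (cnt f a (Suc y)) then 0 else 1)"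
    unfolding cnt_Suc by auto
  with ev_precS[OF Suc[unfolded HP_def] g] show ?case unfolding HP_def by simp
qed

definition "RP F = Comp (HP F) (PairF IdP IdP)"

lemma ev_RP:
  assumes F: "\<And>n. ev F n (f n)"
  shows "ev (RP F) x (if even (cnt f x x) then 0 else 1)"
  unfolding RP_def by (rule ev_comp[OF ev_pair[OF ev_IdP ev_IdP] ev_HP[OF F]])

lemma computable_RP:
  assumes "computable_fun f"
  shows "computable_set {x. odd (cnt f x x)}"
proof -
  obtain F where F: "\<And>n. ev F n (f n)" using assms unfolding computable_fun_def by blast
  show ?thesis unfolding computable_set_def computable_fun_def
  proof (rule exI[of _ "RP F"], intro allI)
    fix n show "ev (RP F) n (if n \<in> {x. odd (cnt f x x)} then 1 else 0)"
      using ev_RP[OF F, of n] by (cases "even (cnt f n n)") auto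
  qed
qed

lemma computable_id: "computable_fun (\<lambda>x. x)"
  unfolding computable_fun_def using ev_IdP by blast

lemma computable_comp: "computable_fun f \<Longrightarrow> computable_fun g \<Longrightarrow> computable_fun (\<lambda>x. g (f x))"
  unfolding computable_fun_def by (blast intro: ev_comp)

lemma m_refl: "A \<le>\<^sub>m A"
  unfolding m_reducible_def using computable_id by blast

lemma m_trans: "A \<le>\<^sub>m B \<Longrightarrow> B \<le>\<^sub>m C \<Longrightarrow> A \<le>\<^sub>m C"
  unfolding m_reducible_def by (blast intro: computable_comp)

definition Oset :: "(nat \<Rightarrow> nat) \<Rightarrow> nat \<Rightarrow> nat set" where
  "Oset f n = {y. odd (card {x. x < n \<and> f x = y})}"

definition agr :: "(nat \<Rightarrow> nat) \<Rightarrow> nat set \<Rightarrow> nat \<Rightarrow> nat" where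
  "agr f Bs n = card {x. x < n \<and> (f x \<in> Bs \<longleftrightarrow> odd (cnt f x x))}"

lemma Oset_sub: "Oset f n \<subseteq> f ` {..<n}"
proof
  fix y assume "y \<in> Oset f n"
  then have o: "odd (card {x. x < n \<and> f x = y})" unfolding Oset_def by simp
  have "{x. x < n \<and> f x = y} \<noteq> {}"
  proof
    assume "{x. x < n \<and> f x = y} = {}"
    with o show False by simp
  qed
  then show "y \<in> f ` {..<n}" by auto
qed

lemma Oset_finite: "finite (Oset f n)"
  using finite_subset[OF Oset_sub] by simp

lemma Oset_card: "card (Oset f n) \<le> n"
proof -
  have "card (Oset f n) \<le> card (f ` {..<n})" by (rule card_mono[OF _ Oset_sub]) simp
  also have "\<dots> \<le> card {..<n}" by (rule card_image_le) simp
  finally show ?thesis by simp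
qed

lemma card_Suc_fib: "card {x. x < Suc n \<and> f x = z} = card {x. x < n \<and> f x = z} + (if f n = z then 1 else 0)"
proof -
  have "{x. x < Suc n \<and> f x = z} = {x. x < n \<and> f x = z} \<union> (if f n = z then {n} else {})"
  proof (intro set_eqI iffI)
    fix x assume "x \<in> {x. x < Suc n \<and> f x = z}"
    then have "x < n \<or> x = n" "f x = z" by auto
    then show "x \<in> {x. x < n \<and> f x = z} \<union> (if f n = z then {n} else {})" by auto
  qed (auto split: if_splits)
  then show ?thesis by (auto simp: card_insert_if)
qed

lemma Oset_Suc:
  "Oset f (Suc n) = (if even (cnt f n n) then insert (f n) (Oset f n) else Oset f n - {f n})"
proof (intro set_eqI)
  fix z
  have "z \<in> Oset f (Suc n) \<longleftrightarrow> odd (card {x. x < n \<and> f x = z} + (if f n = z then 1 else 0))"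
    unfolding Oset_def by (simp add: card_Suc_fib)
  moreover have "z \<in> Oset f n \<longleftrightarrow> odd (card {x. x < n \<and> f x = z})"
    unfolding Oset_def by simp
  moreover have "cnt f n n = card {x. x < n \<and> f x = f n}" unfolding cnt_def by simp
  ultimately show "z \<in> Oset f (Suc n) \<longleftrightarrow> z \<in> (if even (cnt f n n) then insert (f n) (Oset f n) else Oset f n - {f n})"
    by (cases "z = f n") auto
qed

lemma fn_in_Oset: "f n \<in> Oset f n \<longleftrightarrow> odd (cnt f n n)"
  unfolding Oset_def cnt_def by simp

lemma agr_Suc: "agr f Bs (Suc n) = agr f Bs n + (if (f n \<in> Bs \<longleftrightarrow> odd (cnt f n n)) then 1 else 0)"
proof -
  let ?P = "\<lambda>x. (f x \<in> Bs \<longleftrightarrow> odd (cnt f x x))"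
  have "{x. x < Suc n \<and> ?P x} = {x. x < n \<and> ?P x} \<union> (if ?P n then {n} else {})"
  proof (intro set_eqI iffI)
    fix x assume "x \<in> {x. x < Suc n \<and> ?P x}"
    then have "x < n \<or> x = n" "?P x" by auto
    then show "x \<in> {x. x < n \<and> ?P x} \<union> (if ?P n then {n} else {})" by auto
  qed (auto split: if_splits)
  then show ?thesis unfolding agr_def by (auto simp: card_insert_if)
qed

lemma agr_identity: "2 * agr f Bs n + card (Oset f n) = n + 2 * card (Oset f n - Bs)"
proof (induction n)
  case 0 show ?case by (simp add: agr_def Oset_def)
next
  case (Suc n)
  have fin: "finite (Oset f n)" by (rule Oset_finite)
  show ?case
  proof (cases "even (cnt f n n)")
    case True
    then have nin: "f n \<notin> Oset f n" using fn_in_Oset by blast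
    have c1: "card (Oset f (Suc n)) = card (Oset f n) + 1"
      using True nin fin by (simp add: Oset_Suc)
    have c2: "card (Oset f (Suc n) - Bs) = card (Oset f n - Bs) + (if f n \<in> Bs then 0 else 1)"
    proof -
      have "Oset f (Suc n) - Bs = (if f n \<in> Bs then Oset f n - Bs else insert (f n) (Oset f n - Bs))"
        using True by (auto simp: Oset_Suc)
      then show ?thesis using nin fin by auto
    qed
    have a: "agr f Bs (Suc n) = agr f Bs n + (if f n \<in> Bs then 0 else 1)"
      using True by (simp add: agr_Suc)
    show ?thesis using Suc.IH c1 c2 a by (simp split: if_splits)
  next
    case False
    then have isin: "f n \<in> Oset f n" using fn_in_Oset by blast
    have c1: "card (Oset f (Suc n)) + 1 = card (Oset f n)"
    proof -
      have "card (Oset f n) > 0" using isin fin by (auto simp: card_gt_0_iff)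
      moreover have "card (Oset f (Suc n)) = card (Oset f n) - 1"
        using False isin fin by (simp add: Oset_Suc card_Diff_singleton)
      ultimately show ?thesis by simp
    qed
    have c2: "card (Oset f (Suc n) - Bs) + (if f n \<in> Bs then 0 else 1) = card (Oset f n - Bs)"
    proof -
      have "Oset f (Suc n) - Bs = Oset f n - Bs - {f n}"
        using False by (auto simp: Oset_Suc)
      moreover have "finite (Oset f n - Bs)" using fin by simp
      ultimately show ?thesis
      proof (cases "f n \<in> Bs")
        case True
        then have "Oset f n - Bs - {f n} = Oset f n - Bs" by auto
        with True \<open>Oset f (Suc n) - Bs = Oset f n - Bs - {f n}\<close> show ?thesis by simp
      next
        case False
        then have i2: "f n \<in> Oset f n - Bs" using isin by simp
        have fin2: "finite (Oset f n - Bs)" using fin by simp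
        then have "card (Oset f n - Bs) > 0" using i2 by (auto simp: card_gt_0_iff)
        moreover have "card (Oset f n - Bs - {f n}) = card (Oset f n - Bs) - 1"
          using i2 fin2 by (simp add: card_Diff_singleton)
        ultimately show ?thesis using False \<open>Oset f (Suc n) - Bs = Oset f n - Bs - {f n}\<close> by simp
      qed
    qed
    have a: "agr f Bs (Suc n) = agr f Bs n + (if f n \<in> Bs then 1 else 0)"
      using False by (simp add: agr_Suc)
    show ?thesis using Suc.IH c1 c2 a by (simp split: if_splits)
  qed
qed

locale coins =
  fixes q :: real
  assumes q: "0 \<le> q" "q \<le> 1"
begin

definition N :: "bool measure" where "N = measure_pmf (bernoulli_pmf q)"
definition M :: "(nat \<Rightarrow> bool) measure" where "M = PiM UNIV (\<lambda>_. N)"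

lemma probN: "prob_space N" unfolding N_def by (rule prob_space_measure_pmf)

lemma probM: "prob_space M" unfolding M_def by (rule prob_space_PiM[OF probN])

lemma space_M[simp]: "space M = UNIV"
  unfolding M_def by (simp add: space_PiM N_def)

lemma sets_N[simp]: "sets N = UNIV" unfolding N_def by simp

lemma comp_meas[measurable]: "(\<lambda>\<omega>. \<omega> i) \<in> measurable M N"
  unfolding M_def by measurable

lemma distr_comp: "distr M N (\<lambda>\<omega>. \<omega> i) = N"
  unfolding M_def by (rule distr_PiM_component[OF probN]) simp

lemma indep: "prob_space.indep_vars M (\<lambda>_. N) (\<lambda>i \<omega>. \<omega> i) UNIV"
proof -
  interpret prob_space M by (rule probM)
  have "distr M (\<Pi>\<^sub>M i\<in>UNIV. N) (\<lambda>x. \<lambda>i\<in>UNIV. x i) = (\<Pi>\<^sub>M i\<in>UNIV. distr M N (\<lambda>\<omega>. \<omega> i))"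
  proof -
    have "distr M (\<Pi>\<^sub>M i\<in>UNIV. N) (\<lambda>x. \<lambda>i\<in>UNIV. x i) = distr M M (\<lambda>x. x)"
      by (simp add: M_def restrict_UNIV)
    also have "\<dots> = M" by (rule distr_id)
    finally show ?thesis using distr_comp by (simp add: M_def)
  qed
  then show ?thesis
    by (subst indep_vars_iff_distr_eq_PiM) auto
qed

lemma prob_comp: "measure M {\<omega>. \<omega> i} = q"
proof -
  have "measure M {\<omega>. \<omega> i} = measure (distr M N (\<lambda>\<omega>. \<omega> i)) {True}"
    by (subst measure_distr) (auto intro!: arg_cong[where f="measure M"])
  also have "\<dots> = measure N {True}" by (simp only: distr_comp)
  also have "\<dots> = q" using q by (simp add: N_def measure_pmf_single)
  finally show ?thesis .
qed

definition X :: "(nat \<Rightarrow> bool) \<Rightarrow> nat \<Rightarrow> (nat \<Rightarrow> bool) \<Rightarrow> real" where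
  "X s y \<omega> = (if \<omega> y = s y then 1 else 0)"

definition e :: "(nat \<Rightarrow> bool) \<Rightarrow> nat \<Rightarrow> real" where
  "e s y = (if s y then q else 1 - q)"

lemma meas_N: "f \<in> measurable N (count_space UNIV)"
  unfolding N_def by simp

lemma meas_Nb: "(f :: bool \<Rightarrow> real) \<in> borel_measurable N"
  unfolding N_def by simp

lemma X_meas[measurable]: "X s y \<in> borel_measurable M"
proof -
  have "(\<lambda>\<omega>. (\<lambda>b. if b = s y then 1 else (0::real)) (\<omega> y)) \<in> borel_measurable M"
    by (rule measurable_compose[OF comp_meas meas_Nb])
  then show ?thesis unfolding X_def[abs_def] by simp
qed

lemma sets_coord: "{\<omega>. \<omega> y = b} \<in> sets M"
proof -
  have "(\<lambda>\<omega>. \<omega> y) -` {b} \<inter> space M \<in> sets M"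
    by (rule measurable_sets[OF comp_meas]) simp
  moreover have "(\<lambda>\<omega>. \<omega> y) -` {b} \<inter> space M = {\<omega>. \<omega> y = b}" by auto
  ultimately show ?thesis by simp
qed

lemma indepX: "prob_space.indep_vars M (\<lambda>_. borel) (X s) J"
proof -
  interpret prob_space M by (rule probM)
  have "indep_vars (\<lambda>_. borel) (\<lambda>i \<omega>. (\<lambda>b. if b = s i then 1 else (0::real)) (\<omega> i)) UNIV"
    by (rule indep_vars_compose2[OF indep]) (rule meas_Nb)
  then have "indep_vars (\<lambda>_. borel) (X s) UNIV" unfolding X_def[abs_def] by simp
  then show ?thesis by (rule indep_vars_subset) simp
qed

lemma prob_eq: "measure M {\<omega>. \<omega> y = s y} = e s y"
proof -
  interpret prob_space M by (rule probM)
  show ?thesis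
  proof (cases "s y")
    case True then show ?thesis using prob_comp[of y] by (simp add: e_def)
  next
    case False
    have "{\<omega>. \<omega> y = s y} = space M - {\<omega>. \<omega> y}" using False by auto
    then have "measure M {\<omega>. \<omega> y = s y} = 1 - measure M {\<omega>. \<omega> y}"
      using prob_compl[OF sets_coord[of y True]] by simp
    then show ?thesis using prob_comp[of y] False by (simp add: e_def)
  qed
qed

lemma expect_X: "prob_space.expectation M (X s y) = e s y"
proof -
  have "X s y = indicator {\<omega>. \<omega> y = s y}" unfolding X_def by (auto simp: indicator_def)
  then have "integral\<^sup>L M (X s y) = measure M {\<omega>. \<omega> y = s y}"
    using probM by (simp add: prob_space.prob_space finite_measure.emeasure_eq_measure)
  then show ?thesis using prob_eq by simp
qed

lemma hoeff_le:
  assumes "finite J" "J \<noteq> {}" "\<delta> \<ge> 0"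
  shows "measure M {\<omega>. (\<Sum>y\<in>J. X s y \<omega>) \<le> (\<Sum>y\<in>J. e s y) - \<delta>} \<le> exp (-2 * \<delta>\<^sup>2 / card J)"
proof -
  interpret prob_space M by (rule probM)
  interpret H: Hoeffding_ineq M J "X s" "\<lambda>_. 0" "\<lambda>_. 1" "\<Sum>y\<in>J. e s y"
  proof unfold_locales
    show "finite J" by fact
    show "indep_vars (\<lambda>_. borel) (X s) J" by (rule indepX)
    show "\<And>i. i \<in> J \<Longrightarrow> AE x in M. X s i x \<in> {0..1}" by (auto simp: X_def)
    show "(\<Sum>y\<in>J. e s y) \<equiv> \<Sum>i\<in>J. expectation (X s i)" by (simp add: expect_X)
  qed
  have "(\<Sum>i\<in>J. ((1::real) - 0)\<^sup>2) = card J" by simp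
  moreover have "card J > 0" using assms by auto
  ultimately show ?thesis using H.Hoeffding_ineq_le[OF assms(3)] by simp
qed

lemma hoeff_ge:
  assumes "finite J" "J \<noteq> {}" "\<delta> \<ge> 0"
  shows "measure M {\<omega>. (\<Sum>y\<in>J. X s y \<omega>) \<ge> (\<Sum>y\<in>J. e s y) + \<delta>} \<le> exp (-2 * \<delta>\<^sup>2 / card J)"
proof -
  interpret prob_space M by (rule probM)
  interpret H: Hoeffding_ineq M J "X s" "\<lambda>_. 0" "\<lambda>_. 1" "\<Sum>y\<in>J. e s y"
  proof unfold_locales
    show "finite J" by fact
    show "indep_vars (\<lambda>_. borel) (X s) J" by (rule indepX)
    show "\<And>i. i \<in> J \<Longrightarrow> AE x in M. X s i x \<in> {0..1}" by (auto simp: X_def)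
    show "(\<Sum>y\<in>J. e s y) \<equiv> \<Sum>i\<in>J. expectation (X s i)" by (simp add: expect_X)
  qed
  have "(\<Sum>i\<in>J. ((1::real) - 0)\<^sup>2) = card J" by simp
  moreover have "card J > 0" using assms by auto
  ultimately show ?thesis using H.Hoeffding_ineq_ge[OF assms(3)] by simp
qed

lemma BC:
  assumes meas: "\<And>n. A n \<in> sets M" and bnd: "\<And>n. measure M (A n) \<le> exp (- c * real n)" and c: "c > 0"
  shows "AE \<omega> in M. eventually (\<lambda>n. \<omega> \<notin> A n) sequentially"
proof -
  interpret prob_space M by (rule probM)
  have g: "summable (\<lambda>n. exp (- c) ^ n)" using c by (intro summable_geometric) simp
  have "summable (\<lambda>n. measure M (A n))"
  proof (rule summable_comparison_test'[OF g])
    fix n show "norm (measure M (A n)) \<le> exp (- c) ^ n"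
      using bnd[of n] by (simp add: exp_of_nat_mult[symmetric] mult.commute)
  qed
  then have "AE x in M. eventually (\<lambda>n. x \<in> space M - A n) sequentially"
    by (intro borel_cantelli_AE1 meas) (auto simp: emeasure_eq_measure)
  then show ?thesis by simp
qed

lemma sum_event[measurable]: "{\<omega>. P (\<Sum>y\<in>J. X s y \<omega>)} \<in> sets M" if "Measurable.pred borel P"
proof -
  have "(\<lambda>\<omega>. \<Sum>y\<in>J. X s y \<omega>) \<in> borel_measurable M" by measurable
  then have "Measurable.pred M (\<lambda>\<omega>. P (\<Sum>y\<in>J. X s y \<omega>))" using that by measurable
  then show ?thesis using space_M by (simp add: pred_def)
qed

lemma sum_X_le: "(\<Sum>y\<in>J. X s y \<omega>) \<le> card J"
proof -
  have "(\<Sum>y\<in>J. X s y \<omega>) \<le> (\<Sum>y\<in>J. 1)" by (rule sum_mono) (simp add: X_def)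
  then show ?thesis by simp
qed

lemma sum_X_ge0: "(\<Sum>y\<in>J. X s y \<omega>) \<ge> 0"
  by (rule sum_nonneg) (simp add: X_def)

lemma AE_low:
  assumes fin: "\<And>n. finite (J n)" and cardJ: "\<And>n. card (J n) \<le> n"
    and ep: "\<And>y. pp \<le> e s y" and eps: "(\<epsilon>::real) > 0"
  shows "AE \<omega> in M. eventually (\<lambda>n. (\<Sum>y\<in>J n. X s y \<omega>) > pp * card (J n) - \<epsilon> * n) sequentially"
proof -
  interpret prob_space M by (rule probM)
  define A where "A n = {\<omega>. (\<Sum>y\<in>J n. X s y \<omega>) \<le> pp * card (J n) - \<epsilon> * n}" for n
  have meas: "A n \<in> sets M" for n unfolding A_def by measurable
  have bnd: "measure M (A n) \<le> exp (- (2 * \<epsilon>\<^sup>2) * real n)" for n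
  proof (cases "J n = {}")
    case True
    show ?thesis
    proof (cases "n = 0")
      case True then show ?thesis by simp
    next
      case False
      with True eps have "A n = {}" unfolding A_def by (auto simp: mult_le_0_iff)
      then show ?thesis by simp
    qed
  next
    case False
    have cpos: "card (J n) > 0" using False fin by (simp add: card_gt_0_iff)
    have "pp * card (J n) = (\<Sum>y\<in>J n. pp)" by simp
    also have "\<dots> \<le> (\<Sum>y\<in>J n. e s y)" by (rule sum_mono) (rule ep)
    finally have le: "pp * card (J n) \<le> (\<Sum>y\<in>J n. e s y)" .
    have sub: "A n \<subseteq> {\<omega>. (\<Sum>y\<in>J n. X s y \<omega>) \<le> (\<Sum>y\<in>J n. e s y) - \<epsilon> * n}"
      unfolding A_def using le by auto
    have "measure M (A n) \<le> measure M {\<omega>. (\<Sum>y\<in>J n. X s y \<omega>) \<le> (\<Sum>y\<in>J n. e s y) - \<epsilon> * n}"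
      by (rule finite_measure_mono[OF sub]) measurable
    also have "\<dots> \<le> exp (-2 * (\<epsilon> * n)\<^sup>2 / card (J n))"
      by (rule hoeff_le[OF fin False]) (use eps in simp)
    also have "\<dots> \<le> exp (- (2 * \<epsilon>\<^sup>2) * real n)"
    proof -
      have n: "real (card (J n)) \<le> n" using cardJ[of n] by simp
      have "2 * \<epsilon>\<^sup>2 * real n * real (card (J n)) \<le> 2 * \<epsilon>\<^sup>2 * real n * real n"
        by (rule mult_left_mono[OF n]) simp
      then have "2 * \<epsilon>\<^sup>2 * real n \<le> 2 * (\<epsilon> * n)\<^sup>2 / card (J n)"
        using cpos by (simp add: field_simps power2_eq_square)
      then show ?thesis by simp
    qed
    finally show ?thesis .
  qed
  have "AE \<omega> in M. eventually (\<lambda>n. \<omega> \<notin> A n) sequentially"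
    by (rule BC[OF meas bnd]) (use eps in simp)
  then show ?thesis unfolding A_def by (simp add: not_le)
qed

lemma AE_high:
  assumes fin: "\<And>k. finite (J k)" and cardJ: "\<And>k. card (J k) \<ge> k"
    and ep: "\<And>k y. y \<in> J k \<Longrightarrow> e s y = pp" and eps: "\<epsilon> > 0"
  shows "AE \<omega> in M. eventually (\<lambda>k. (\<Sum>y\<in>J k. X s y \<omega>) < (pp + \<epsilon>) * card (J k)) sequentially"
proof -
  interpret prob_space M by (rule probM)
  define A where "A k = {\<omega>. (\<Sum>y\<in>J k. X s y \<omega>) \<ge> (pp + \<epsilon>) * card (J k)}" for k
  have meas: "A k \<in> sets M" for k unfolding A_def by measurable
  have bnd: "measure M (A k) \<le> exp (- (2 * \<epsilon>\<^sup>2) * real k)" for k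
  proof (cases "J k = {}")
    case True
    then have "k = 0" using cardJ[of k] by simp
    then show ?thesis by simp
  next
    case False
    have cpos: "card (J k) > 0" using False fin by (simp add: card_gt_0_iff)
    have le: "(\<Sum>y\<in>J k. e s y) = pp * card (J k)" using ep by simp
    have sub: "A k \<subseteq> {\<omega>. (\<Sum>y\<in>J k. X s y \<omega>) \<ge> (\<Sum>y\<in>J k. e s y) + \<epsilon> * card (J k)}"
      unfolding A_def le by (auto simp: algebra_simps)
    have "measure M (A k) \<le> measure M {\<omega>. (\<Sum>y\<in>J k. X s y \<omega>) \<ge> (\<Sum>y\<in>J k. e s y) + \<epsilon> * card (J k)}"
      by (rule finite_measure_mono[OF sub]) measurable
    also have "\<dots> \<le> exp (-2 * (\<epsilon> * card (J k))\<^sup>2 / card (J k))"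
      by (rule hoeff_ge[OF fin False]) (use eps in simp)
    also have "\<dots> \<le> exp (- (2 * \<epsilon>\<^sup>2) * real k)"
    proof -
      have n: "real k \<le> card (J k)" using cardJ[of k] by simp
      have "2 * \<epsilon>\<^sup>2 * real k \<le> 2 * \<epsilon>\<^sup>2 * card (J k)"
        by (rule mult_left_mono[OF n]) simp
      also have "\<dots> = 2 * (\<epsilon> * card (J k))\<^sup>2 / card (J k)"
        using cpos by (simp add: field_simps power2_eq_square)
      finally show ?thesis by simp
    qed
    finally show ?thesis .
  qed
  have "AE \<omega> in M. eventually (\<lambda>k. \<omega> \<notin> A k) sequentially"
    by (rule BC[OF meas bnd]) (use eps in simp)
  then show ?thesis unfolding A_def by (simp add: not_le)
qed

end

instance recf :: countable by countable_datatype

definition CS :: "nat \<Rightarrow> nat set" where "CS i = {y. ev (from_nat i :: recf) y 1}"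
definition T :: "nat \<Rightarrow> bool" where
  "T y = (\<exists>k. fact k \<le> y \<and> y < fact (Suc k) \<and> y \<in> CS (fst (prod_decode k)))"
definition fnc :: "recf \<Rightarrow> nat \<Rightarrow> nat" where "fnc c n = (THE k. ev c n k)"
definition chunk :: "nat \<Rightarrow> nat set" where "chunk k = {fact k..<fact (Suc k)}"

lemma fnc_eq: assumes "\<And>n. ev c n (f n)" shows "fnc c = f"
proof
  fix n show "fnc c n = f n" unfolding fnc_def
    by (rule the_equality[where P="\<lambda>k. ev c n k", OF assms]) (use ev_det assms in blast)
qed

lemma chunk_unique:
  assumes "fact k \<le> y" "y < fact (Suc k)" "fact k' \<le> (y::nat)" "y < fact (Suc k')"
  shows "k = k'"
proof (rule ccontr)
  assume "k \<noteq> k'"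
  then have "Suc k \<le> k' \<or> Suc k' \<le> k" by auto
  then show False
  proof
    assume "Suc k \<le> k'"
    then have "(fact (Suc k) :: nat) \<le> fact k'" by (rule fact_mono)
    with assms show False by simp
  next
    assume "Suc k' \<le> k"
    then have "(fact (Suc k') :: nat) \<le> fact k" by (rule fact_mono)
    with assms show False by simp
  qed
qed

lemma card_chunk: "card (chunk k) \<ge> k"
proof -
  have "card (chunk k) = fact (Suc k) - fact k" unfolding chunk_def by simp
  also have "\<dots> = k * fact k" by (simp add: algebra_simps)
  also have "\<dots> \<ge> k * 1" by (rule mult_le_mono2) (simp add: Suc_le_eq)
  finally show ?thesis by simp
qed

lemma T_chunk:
  assumes R: "\<And>n. ev c n (if n \<in> R then 1 else 0)" and y: "y \<in> chunk (prod_encode (to_nat c, i))"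
  shows "T y \<longleftrightarrow> y \<in> R"
proof -
  let ?k = "prod_encode (to_nat c, i)"
  have CSR: "CS (fst (prod_decode ?k)) = R"
  proof -
    have "CS (fst (prod_decode ?k)) = {y. ev c y 1}" unfolding CS_def by simp
    also have "\<dots> = R"
    proof (intro set_eqI iffI)
      fix z assume "z \<in> {y. ev c y 1}"
      then have "ev c z 1" by simp
      with R[of z] have "(if z \<in> R then 1 else 0) = (1::nat)" using ev_det by blast
      then show "z \<in> R" by (simp split: if_splits)
    next
      fix z assume "z \<in> R" then show "z \<in> {y. ev c y 1}" using R[of z] by simp
    qed
    finally show ?thesis .
  qed
  have yk: "fact ?k \<le> y" "y < fact (Suc ?k)" using y unfolding chunk_def by auto
  show ?thesis
  proof
    assume "T y"
    then obtain k where k: "fact k \<le> y" "y < fact (Suc k)" "y \<in> CS (fst (prod_decode k))"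
      unfolding T_def by blast
    with yk have "k = ?k" using chunk_unique by blast
    with k CSR show "y \<in> R" by simp
  next
    assume "y \<in> R" then show "T y" unfolding T_def using yk CSR by blast
  qed
qed

lemma liminf_le_real:
  fixes X :: "nat \<Rightarrow> ereal"
  assumes "\<And>r. r > p \<Longrightarrow> \<forall>N. \<exists>n\<ge>N. X n \<le> ereal r"
  shows "liminf X \<le> ereal p"
proof (rule ccontr)
  assume "\<not> liminf X \<le> ereal p"
  then have "ereal p < liminf X" by simp
  then obtain r where r: "ereal p < ereal r" "ereal r < liminf X" using ereal_dense2 by blast
  have "eventually (\<lambda>n. ereal r < X n) sequentially"
    using r(2) le_Liminf_iff[of "liminf X" sequentially X] by auto
  then obtain N where N: "\<And>n. n \<ge> N \<Longrightarrow> ereal r < X n" unfolding eventually_sequentially by blast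
  from r(1) have "r > p" by simp
  from assms[OF this] obtain n where "n \<ge> N" "X n \<le> ereal r" by blast
  with N[of n] show False by simp
qed

lemma liminf_ge_real:
  fixes X :: "nat \<Rightarrow> ereal"
  assumes "\<And>r. r < p \<Longrightarrow> eventually (\<lambda>n. ereal r < X n) sequentially"
  shows "ereal p \<le> liminf X"
proof (subst le_Liminf_iff, intro allI impI)
  fix y assume "y < ereal p"
  show "eventually (\<lambda>n. y < X n) sequentially"
  proof (cases y)
    case (real r)
    with \<open>y < ereal p\<close> have "r < p" by simp
    with assms real show ?thesis by simp
  next
    case PInf with \<open>y < ereal p\<close> show ?thesis by simp
  next
    case MInf
    have "eventually (\<lambda>n. ereal (p - 1) < X n) sequentially" using assms[of "p - 1"] by simp
    then show ?thesis by (rule eventually_mono) (use MInf in auto)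
  qed
qed

lemma lower_part:
  fixes p :: real
  assumes L: "\<And>c m. eventually (\<lambda>n. real (card {y\<in>Oset (fnc c) n. \<omega> y = T y}) > p * card (Oset (fnc c) n) - (1 / real (Suc m)) * n) sequentially"
    and p: "p \<le> 1/2"
    and red: "A \<le>\<^sub>m {y. T y \<noteq> \<omega> y}"
  shows "ereal p \<le> gamma A"
proof -
  define Bs where "Bs = {y. T y \<noteq> \<omega> y}"
  obtain f where fc: "computable_fun f" and fA: "\<And>x. x \<in> A \<longleftrightarrow> f x \<in> Bs"
    using red unfolding m_reducible_def Bs_def by blast
  obtain c where c: "\<And>n. ev c n (f n)" using fc unfolding computable_fun_def by blast
  have fnc: "fnc c = f" by (rule fnc_eq[OF c])
  define R where "R = {x. odd (cnt f x x)}"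
  have Rc: "computable_set R" unfolding R_def by (rule computable_RP[OF fc])
  have ld: "ereal p \<le> lower_density (agree A R)"
    unfolding lower_density_def
  proof (rule liminf_ge_real)
    fix r assume "r < p"
    then obtain m0 where m0: "m0 > 0" "inverse (real m0) < p - r"
      using ex_inverse_of_nat_less[of "p - r"] by auto
    define m where "m = m0 - 1"
    have sm: "real (Suc m) = real m0" using m0 by (simp add: m_def)
    have ev1: "eventually (\<lambda>n. real (card {y\<in>Oset f n. \<omega> y = T y}) > p * card (Oset f n) - (1 / real (Suc m)) * n) sequentially"
      using L[of c m] unfolding fnc .
    have ev2: "eventually (\<lambda>n. n > (0::nat)) sequentially" by (rule eventually_gt_at_top)
    show "eventually (\<lambda>n. ereal r < ereal (real (card (agree A R \<inter> {..<n})) / real n)) sequentially"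
      using ev1 ev2
    proof eventually_elim
      case (elim n)
      let ?O = "Oset f n"
      have set1: "agree A R \<inter> {..<n} = {x. x < n \<and> (f x \<in> Bs \<longleftrightarrow> odd (cnt f x x))}"
        unfolding agree_def R_def using fA by auto
      have c1: "card (agree A R \<inter> {..<n}) = agr f Bs n" unfolding set1 agr_def ..
      have set2: "?O - Bs = {y\<in>?O. \<omega> y = T y}" unfolding Bs_def by auto
      have idn: "2 * agr f Bs n + card ?O = n + 2 * card (?O - Bs)" by (rule agr_identity)
      then have idr: "2 * real (agr f Bs n) + real (card ?O) = real n + 2 * real (card (?O - Bs))"
        by (metis (mono_tags, opaque_lifting) of_nat_add of_nat_mult of_nat_numeral)
      have cO: "real (card ?O) \<le> real n" using Oset_card by simp
      have pp: "(1 - 2 * p) * real (card ?O) \<le> (1 - 2 * p) * real n"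
        by (rule mult_left_mono[OF cO]) (use p in simp)
      have e1: "real (card (?O - Bs)) > p * card ?O - (1 / real (Suc m)) * n"
        using elim(1) unfolding set2 .
      define d where "d = (1 / real (Suc m)) * n"
      have "2 * real (agr f Bs n) > 2 * p * n - 2 * d"
        using idr e1[folded d_def] pp by (simp add: algebra_simps)
      then have "real (agr f Bs n) > p * n - d" by linarith
      moreover have "(p - 1 / real (Suc m)) * n = p * n - d" unfolding d_def by (simp add: algebra_simps)
      ultimately have "real (agr f Bs n) > (p - 1 / real (Suc m)) * n" by simp
      then have "real (agr f Bs n) / n > p - 1 / real (Suc m)"
        using elim(2) by (simp add: pos_less_divide_eq)
      moreover have "1 / real (Suc m) < p - r" using m0 sm by (simp add: divide_inverse)
      ultimately have "real (agr f Bs n) / n > r" by simp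
      then show ?case unfolding c1 by simp
    qed
  qed
  also have "\<dots> \<le> gamma A" unfolding gamma_def
    by (rule Sup_upper) (use Rc in blast)
  finally show ?thesis .
qed

lemma upper_part:
  fixes p :: real
  assumes U: "\<And>m. eventually (\<lambda>k. real (card {y\<in>chunk k. \<omega> y = False}) < (p + 1 / real (Suc m)) * card (chunk k)) sequentially"
    and p0: "0 \<le> p"
  shows "gamma {y. T y \<noteq> \<omega> y} \<le> ereal p"
  unfolding gamma_def
proof (rule Sup_least)
  fix z assume "z \<in> {lower_density (agree {y. T y \<noteq> \<omega> y} R) |R. computable_set R}"
  then obtain R where z: "z = lower_density (agree {y. T y \<noteq> \<omega> y} R)" and Rc: "computable_set R" by blast
  obtain c0 where c0: "\<And>n. ev c0 n (if n \<in> R then 1 else 0)"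
    using Rc unfolding computable_set_def computable_fun_def by blast
  define Bs where "Bs = {y. T y \<noteq> \<omega> y}"
  show "z \<le> ereal p" unfolding z lower_density_def
  proof (rule liminf_le_real, intro allI)
    fix r N assume "r > p"
    then obtain m0 where m0: "m0 > 0" "inverse (real m0) < (r - p) / 2"
      using ex_inverse_of_nat_less[of "(r - p) / 2"] by auto
    define m where "m = m0 - 1"
    have "Suc m = m0" unfolding m_def using m0(1) by (cases m0) auto
    then have sm0: "real (Suc m) = real m0" by simp
    have sm: "1 / real (Suc m) < (r - p) / 2" using m0(2) unfolding sm0 by (simp add: inverse_eq_divide)
    obtain K where K: "\<And>k. k \<ge> K \<Longrightarrow> real (card {y\<in>chunk k. \<omega> y = False}) < (p + 1 / real (Suc m)) * card (chunk k)"
      using U[of m] unfolding eventually_sequentially by blast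
    define k where "k = prod_encode (to_nat c0, N + K + m)"
    have kge: "k \<ge> N + K + m" unfolding k_def by (rule le_prod_encode_2)
    define n where "n = (fact (Suc k) :: nat)"
    have nge: "n \<ge> Suc k" unfolding n_def by (rule fact_ge_self)
    have fk: "fact k \<le> n" unfolding n_def by (rule fact_mono) simp
    have TR: "T y \<longleftrightarrow> y \<in> R" if "y \<in> chunk k" for y
      using T_chunk[OF c0, of y "N + K + m"] that unfolding k_def by simp
    have sub: "agree {y. T y \<noteq> \<omega> y} R \<inter> {..<n} \<subseteq> {..<(fact k::nat)} \<union> {y\<in>chunk k. \<omega> y = False}"
    proof
      fix y assume y: "y \<in> agree {y. T y \<noteq> \<omega> y} R \<inter> {..<n}"
      show "y \<in> {..<(fact k::nat)} \<union> {y\<in>chunk k. \<omega> y = False}"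
      proof (cases "y < fact k")
        case False
        then have yc: "y \<in> chunk k" using y unfolding chunk_def n_def by auto
        have "(T y \<noteq> \<omega> y) = (y \<in> R)" using y unfolding agree_def by auto
        with TR[OF yc] have "\<omega> y = False" by auto
        with yc show ?thesis by simp
      qed simp
    qed
    have "card (agree {y. T y \<noteq> \<omega> y} R \<inter> {..<n}) \<le> card ({..<(fact k::nat)} \<union> {y\<in>chunk k. \<omega> y = False})"
      by (rule card_mono[OF _ sub]) (simp add: chunk_def)
    also have "\<dots> \<le> card {..<(fact k::nat)} + card {y\<in>chunk k. \<omega> y = False}" using card_Un_le by blast
    finally have cle0: "card (agree {y. T y \<noteq> \<omega> y} R \<inter> {..<n}) \<le> (fact k :: nat) + card {y\<in>chunk k. \<omega> y = False}"
      by simp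
    then have "real (card (agree {y. T y \<noteq> \<omega> y} R \<inter> {..<n})) \<le> real ((fact k :: nat) + card {y\<in>chunk k. \<omega> y = False})"
      by (simp only: of_nat_le_iff)
    then have cle: "real (card (agree {y. T y \<noteq> \<omega> y} R \<inter> {..<n})) \<le> real (fact k :: nat) + real (card {y\<in>chunk k. \<omega> y = False})"
      by (simp only: of_nat_add)
    have "k \<ge> K" using kge by simp
    from K[OF this] have cK: "real (card {y\<in>chunk k. \<omega> y = False}) < (p + 1 / real (Suc m)) * card (chunk k)" .
    have cc: "real (card (chunk k)) \<le> n" unfolding chunk_def n_def by simp
    have "(p + 1 / real (Suc m)) * card (chunk k) \<le> (p + 1 / real (Suc m)) * n"
      by (rule mult_left_mono[OF cc]) (use p0 in simp)
    have npos: "real n > 0" using nge by simp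
    have "real (fact k :: nat) * real (Suc k) = real n" unfolding n_def by (simp add: algebra_simps)
    then have fkn: "real (fact k :: nat) = real n / real (Suc k)" by (simp add: field_simps)
    have "real (Suc k) \<ge> real (Suc m)" using kge by simp
    then have "1 / real (Suc k) \<le> 1 / real (Suc m)" by (rule divide_left_mono) auto
    then have "real n / real (Suc k) \<le> real n / real (Suc m)"
      using npos by (simp add: divide_inverse mult_left_mono)
    have tot: "real (card (agree {y. T y \<noteq> \<omega> y} R \<inter> {..<n})) < (p + 2 / real (Suc m)) * n"
    proof -
      have "real (card (agree {y. T y \<noteq> \<omega> y} R \<inter> {..<n})) < real n / real (Suc k) + (p + 1 / real (Suc m)) * n"
        using cle cK \<open>(p + 1 / real (Suc m)) * card (chunk k) \<le> (p + 1 / real (Suc m)) * n\<close> fkn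
        by (simp add: of_nat_fact)
      also have "\<dots> \<le> real n / real (Suc m) + (p + 1 / real (Suc m)) * n"
        using \<open>real n / real (Suc k) \<le> real n / real (Suc m)\<close> by simp
      also have "\<dots> = (p + 2 / real (Suc m)) * n" by (simp add: algebra_simps)
      finally show ?thesis .
    qed
    have "(p + 2 / real (Suc m)) < r" using sm by simp
    then have "(p + 2 / real (Suc m)) * n \<le> r * n" by (intro mult_right_mono) auto
    with tot have "real (card (agree {y. T y \<noteq> \<omega> y} R \<inter> {..<n})) \<le> r * n" by linarith
    then have "real (card (agree {y. T y \<noteq> \<omega> y} R \<inter> {..<n})) / n \<le> r"
      using npos by (simp add: pos_divide_le_eq)
    moreover have "n \<ge> N" using nge kge by simp
    ultimately show "\<exists>n\<ge>N. ereal (real (card (agree {y. T y \<noteq> \<omega> y} R \<inter> {..<n})) / real n) \<le> ereal r"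
      by auto
  qed
qed

lemma (in coins) sumX_card:
  assumes "finite J"
  shows "(\<Sum>y\<in>J. X s y \<omega>) = real (card {y\<in>J. \<omega> y = s y})"
proof -
  have "(\<Sum>y\<in>J. X s y \<omega>) = (\<Sum>y\<in>J. if \<omega> y = s y then 1 else 0)"
    by (simp add: X_def)
  also have "\<dots> = (\<Sum>y\<in>{y\<in>J. \<omega> y = s y}. 1)"
    by (rule sum.inter_filter[symmetric, OF assms])
  also have "\<dots> = real (card {y\<in>J. \<omega> y = s y})" by simp
  finally show ?thesis .
qed

theorem theorem1p8:
  fixes p :: real
  assumes "0 \<le> p" and "p \<le> 1/2"
  shows "\<exists>D. m_degree D \<and> Gamma_m D = ereal p"
proof -
  define q where "q = 1 - p"
  interpret coins q by unfold_locales (use assms in \<open>auto simp: q_def\<close>)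
  interpret prob_space M by (rule probM)
  have eT: "p \<le> e T y" for y using assms unfolding e_def by (auto simp: q_def)
  have eF: "e (\<lambda>_. False) y = p" for y unfolding e_def by (simp add: q_def)
  have AL: "AE \<omega> in M. \<forall>c::recf. \<forall>m::nat. eventually (\<lambda>n. (\<Sum>y\<in>Oset (fnc c) n. X T y \<omega>) > p * card (Oset (fnc c) n) - (1 / real (Suc m)) * n) sequentially"
    unfolding AE_all_countable
    by (intro allI AE_low Oset_finite Oset_card eT) simp
  have AU: "AE \<omega> in M. \<forall>m::nat. eventually (\<lambda>k. (\<Sum>y\<in>chunk k. X (\<lambda>_. False) y \<omega>) < (p + 1 / real (Suc m)) * card (chunk k)) sequentially"
    unfolding AE_all_countable
    by (intro allI AE_high card_chunk eF) (auto simp: chunk_def)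
  have "\<exists>\<omega>. (\<forall>c::recf. \<forall>m::nat. eventually (\<lambda>n. (\<Sum>y\<in>Oset (fnc c) n. X T y \<omega>) > p * card (Oset (fnc c) n) - (1 / real (Suc m)) * n) sequentially)
     \<and> (\<forall>m::nat. eventually (\<lambda>k. (\<Sum>y\<in>chunk k. X (\<lambda>_. False) y \<omega>) < (p + 1 / real (Suc m)) * card (chunk k)) sequentially)"
  proof (rule ccontr)
    assume na: "\<not> ?thesis"
    have "AE \<omega> in M. False"
      using AE_conjI[OF AL AU] by (rule eventually_mono) (use na in blast)
    then show False by simp
  qed
  then obtain \<omega> where wL: "\<And>c m. eventually (\<lambda>n. (\<Sum>y\<in>Oset (fnc c) n. X T y \<omega>) > p * card (Oset (fnc c) n) - (1 / real (Suc m)) * n) sequentially"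
    and wU: "\<And>m. eventually (\<lambda>k. (\<Sum>y\<in>chunk k. X (\<lambda>_. False) y \<omega>) < (p + 1 / real (Suc m)) * card (chunk k)) sequentially"
    by blast
  have L: "eventually (\<lambda>n. real (card {y\<in>Oset (fnc c) n. \<omega> y = T y}) > p * card (Oset (fnc c) n) - (1 / real (Suc m)) * n) sequentially" for c m
    using wL[of c m] by (simp add: sumX_card Oset_finite)
  have U: "eventually (\<lambda>k. real (card {y\<in>chunk k. \<omega> y = False}) < (p + 1 / real (Suc m)) * card (chunk k)) sequentially" for m
    using wU[of m] by (simp add: sumX_card chunk_def)
  define Bs where "Bs = {y. T y \<noteq> \<omega> y}"
  define D where "D = {A. A \<le>\<^sub>m Bs \<and> Bs \<le>\<^sub>m A}"
  have mD: "m_degree D" unfolding m_degree_def D_def by blast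
  have low: "ereal p \<le> gamma A" if "A \<le>\<^sub>m Bs" for A
    using lower_part[OF L assms(2)] that unfolding Bs_def by blast
  have up: "gamma Bs \<le> ereal p" unfolding Bs_def by (rule upper_part[OF U assms(1)])
  have "Gamma_m D = ereal p"
    unfolding Gamma_m_def
  proof (rule antisym)
    have "Bs \<in> D" unfolding D_def using m_refl by blast
    then have "gamma Bs \<in> {gamma A |A. \<exists>B\<in>D. A \<le>\<^sub>m B}" using m_refl by blast
    then have "Inf {gamma A |A. \<exists>B\<in>D. A \<le>\<^sub>m B} \<le> gamma Bs" by (rule Inf_lower)
    then show "Inf {gamma A |A. \<exists>B\<in>D. A \<le>\<^sub>m B} \<le> ereal p" using up by simp
  next
    show "ereal p \<le> Inf {gamma A |A. \<exists>B\<in>D. A \<le>\<^sub>m B}"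
    proof (rule Inf_greatest)
      fix z assume "z \<in> {gamma A |A. \<exists>B\<in>D. A \<le>\<^sub>m B}"
      then obtain A B where z: "z = gamma A" and B: "B \<in> D" "A \<le>\<^sub>m B" by blast
      from B have "A \<le>\<^sub>m Bs" unfolding D_def using m_trans by blast
      then show "ereal p \<le> z" unfolding z by (rule low)
    qed
  qed
  with mD show ?thesis by blast
qed

end
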